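(* Let $G$, $k\ge 3$, the choice strings, the template strings, $L$ and $d$ be as in the Consensus Patterns construction in the context, and let $s\in\{0,1\}^L$ together with a choice of one length-$L$ substring (match) in each choice string and each template string be a solution of the constructed instance (total Hamming distance at most $d$). Then $s$ and all its matches start with $\mathrm{front\_tag}$.
   Context: Let $G=(V,E)$ be an undirected simple graph with $V=\{v_1,\dots,v_n\}$ and edge set $E=\{e_1,\dots,e_m\}$, and let $k\ge 3$ be an integer. All strings are over $\{0,1\}$. For $1\le p\le n$ let $\mathrm{number}(p)=0^{p-1}10^{n-p}$. Let $\mathrm{front\_tag}=(1^{nk^3}0)^{nk^3}0^{nk^3}$ (length $n^2k^6+2nk^3$). For $1\le i<j\le k$ and an edge $e$ joining $v_r,v_s$ with $r<s$ let $\mathrm{encode}(i,j,e)=(0^n)^{i-1}\,\mathrm{number}(r)\,(0^n)^{j-i-1}\,\mathrm{number}(s)\,(0^n)^{k-j}$ and $\mathrm{block}(i,j,e)=\mathrm{front\_tag}\,\mathrm{encode}(i,j,e)$. The choice string is $c_{i,j}=\mathrm{block}(i,j,e_1)\cdots\mathrm{block}(i,j,e_m)$. There are $\binom{k}{2}-(k-1)$ template strings, each equal to $\mathrm{front\_tag}\,1^{nk}$. Set $L=n^2k^6+2nk^3+nk$ and $d=(\binom{k}{2}-(k-1))nk$. The instance consists of all choice strings and template strings; a solution is a string $s$ of length $L$ and a length-$L$ substring of each input string such that the sum of Hamming distances from $s$ to these substrings is at most $d$. *)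

theory Defs
  imports Main "HOL-Library.Sublist"
begin

(* Binary strings are lists of bool; True = 1, False = 0. *)

definition ones :: "nat \<Rightarrow> bool list" where "ones l = replicate l True"
definition zeros :: "nat \<Rightarrow> bool list" where "zeros l = replicate l False"

definition number :: "nat \<Rightarrow> nat \<Rightarrow> bool list" where
  "number n p = zeros (p - 1) @ [True] @ zeros (n - p)"

definition front_tag :: "nat \<Rightarrow> nat \<Rightarrow> bool list" where
  "front_tag n k = concat (replicate (n * k^3) (ones (n * k^3) @ [False])) @ zeros (n * k^3)"

(* an edge is a pair (r, s) of vertex indices with r < s *)
definition encode :: "nat \<Rightarrow> nat \<Rightarrow> nat \<Rightarrow> nat \<Rightarrow> nat \<times> nat \<Rightarrow> bool list" where
  "encode n k i j e = (case e of (r, s) \<Rightarrow>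
      concat (replicate (i - 1) (zeros n)) @ number n r @
      concat (replicate (j - i - 1) (zeros n)) @ number n s @
      concat (replicate (k - j) (zeros n)))"

definition block :: "nat \<Rightarrow> nat \<Rightarrow> nat \<Rightarrow> nat \<Rightarrow> nat \<times> nat \<Rightarrow> bool list" where
  "block n k i j e = front_tag n k @ encode n k i j e"

definition choice_string :: "nat \<Rightarrow> nat \<Rightarrow> (nat \<times> nat) list \<Rightarrow> nat \<Rightarrow> nat \<Rightarrow> bool list" where
  "choice_string n k es i j = concat (map (block n k i j) es)"

definition template_string :: "nat \<Rightarrow> nat \<Rightarrow> bool list" where
  "template_string n k = front_tag n k @ ones (n * k)"

definition num_templates :: "nat \<Rightarrow> nat" where
  "num_templates k = (k choose 2) - (k - 1)"

definition cp_len :: "nat \<Rightarrow> nat \<Rightarrow> nat" where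
  "cp_len n k = n^2 * k^6 + 2 * n * k^3 + n * k"

definition cp_dist :: "nat \<Rightarrow> nat \<Rightarrow> nat" where
  "cp_dist n k = num_templates k * n * k"

definition pairs :: "nat \<Rightarrow> (nat \<times> nat) set" where
  "pairs k = {(i, j). 1 \<le> i \<and> i < j \<and> j \<le> k}"

definition hamming :: "bool list \<Rightarrow> bool list \<Rightarrow> nat" where
  "hamming x y = length (filter id (map2 (\<noteq>) x y))"

definition substr :: "bool list \<Rightarrow> nat \<Rightarrow> nat \<Rightarrow> bool list" where
  "substr w p l = take l (drop p w)"

definition simple_graph_edges :: "nat \<Rightarrow> (nat \<times> nat) list \<Rightarrow> bool" where
  "simple_graph_edges n es \<longleftrightarrow> distinct es \<and> (\<forall>(r, s) \<in> set es. 1 \<le> r \<and> r < s \<and> s \<le> n)"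

definition is_solution :: "nat \<Rightarrow> nat \<Rightarrow> (nat \<times> nat) list \<Rightarrow> bool list \<Rightarrow>
    (nat \<Rightarrow> nat \<Rightarrow> nat) \<Rightarrow> (nat \<Rightarrow> nat) \<Rightarrow> bool" where
  "is_solution n k es s pc pt \<longleftrightarrow>
     length s = cp_len n k \<and>
     (\<forall>(i, j) \<in> pairs k. pc i j + cp_len n k \<le> length (choice_string n k es i j)) \<and>
     (\<forall>t < num_templates k. pt t + cp_len n k \<le> length (template_string n k)) \<and>
     (\<Sum>(i, j) \<in> pairs k. hamming s (substr (choice_string n k es i j) (pc i j) (cp_len n k)))
       + (\<Sum>t < num_templates k. hamming s (substr (template_string n k) (pt t) (cp_len n k)))
       \<le> cp_dist n k"

end

theory Submission
  imports Defs
begin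

lemma len_ones[simp]: "length (ones m) = m" by (simp add: ones_def)
lemma len_zeros[simp]: "length (zeros m) = m" by (simp add: zeros_def)

lemma len_concat_rep[simp]: "length (concat (replicate m xs)) = m * length xs"
  by (induction m) auto

lemma nth_concat_rep:
  "x < m * length xs \<Longrightarrow> concat (replicate m xs) ! x = xs ! (x mod length xs)"
proof (induction m arbitrary: x)
  case 0 then show ?case by simp
next
  case (Suc m)
  show ?case
  proof (cases "x < length xs")
    case True then show ?thesis by (simp add: nth_append)
  next
    case False
    then have "x - length xs < m * length xs" using Suc.prems by auto
    then show ?thesis using False Suc.IH[of "x - length xs"]
      by (simp add: nth_append mod_if)
  qed
qed

lemma len_ft: "length (front_tag n k) = (n*k^3)*(n*k^3+1) + n*k^3"
  by (simp add: front_tag_def ones_def zeros_def)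

lemma nth_ft:
  assumes "x < length (front_tag n k)"
  shows "front_tag n k ! x = (x < (n*k^3)*(n*k^3+1) \<and> x mod (n*k^3+1) \<noteq> n*k^3)"
proof -
  define N where "N = n*k^3"
  have L: "length (ones N @ [False]) = N+1" by (simp add: ones_def)
  have x: "x < N*(N+1) + N" using assms len_ft[of n k] by (simp add: N_def)
  show ?thesis
  proof (cases "x < N*(N+1)")
    case True
    have "front_tag n k ! x = concat (replicate N (ones N @ [False])) ! x"
      using True unfolding front_tag_def N_def[symmetric] by (simp add: nth_append L)
    also have "\<dots> = (ones N @ [False]) ! (x mod (N+1))"
      using True by (subst nth_concat_rep) (simp_all add: L mult.commute)
    also have "\<dots> = (x mod (N+1) \<noteq> N)"
      using mod_less_divisor[of "N+1" x] by (auto simp: nth_append ones_def less_Suc_eq)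
    finally show ?thesis using True by (simp add: N_def)
  next
    case False
    then show ?thesis using x unfolding front_tag_def N_def[symmetric]
      by (simp add: front_tag_def nth_append zeros_def ones_def N_def[symmetric] mult.commute)
  qed
qed

lemma concat_rep_zeros: "concat (replicate m (zeros n)) = zeros (m*n)"
  by (induction m) (auto simp: zeros_def replicate_add)

lemma zeros_add: "zeros (a+b) = zeros a @ zeros b" by (simp add: zeros_def replicate_add)

lemma encode_form:
  assumes "1 \<le> i" "i < j" "j \<le> k" "1 \<le> r" "r \<le> n" "1 \<le> s" "s \<le> n"
  shows "encode n k i j (r, s) = zeros ((i-1)*n + (r-1)) @ [True] @
           zeros ((n-r) + (j-i-1)*n + (s-1)) @ [True] @ zeros ((n-s) + (k-j)*n)"
  using assms by (simp only: encode_def number_def concat_rep_zeros zeros_add append_assoc prod.case)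

lemma nth_pattern:
  assumes "(zeros a @ [True] @ zeros b @ [True] @ zeros c) ! q" "q < a + 1 + b + 1 + c"
  shows "q = a \<or> q = a + 1 + b"
  using assms by (auto simp: nth_append zeros_def nth_Cons split: if_splits nat.splits)

lemma len_encode:
  assumes "1 \<le> i" "i < j" "j \<le> k" "1 \<le> r" "r \<le> n" "1 \<le> s" "s \<le> n"
  shows "length (encode n k i j (r, s)) = n*k"
proof -
  have "(i-1)*n + (r-1) + 1 + ((n-r) + (j-i-1)*n + (s-1)) + 1 + ((n-s) + (k-j)*n)
     = (i-1)*n + n + (j-i-1)*n + n + (k-j)*n" using assms by simp
  also have "\<dots> = ((i-1) + 1 + (j-i-1) + 1 + (k-j))*n" by (simp add: algebra_simps)
  also have "(i-1) + 1 + (j-i-1) + 1 + (k-j) = k" using assms by simp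
  finally show ?thesis using encode_form[OF assms] by (simp add: mult.commute)
qed

lemma nth_encode:
  assumes "1 \<le> i" "i < j" "j \<le> k" "1 \<le> r" "r \<le> n" "1 \<le> s" "s \<le> n"
    and "encode n k i j (r, s) ! q" and "q < n*k"
  shows "q div n = i - 1 \<or> q div n = j - 1"
proof -
  have ql: "q < (i-1)*n + (r-1) + 1 + ((n-r) + (j-i-1)*n + (s-1)) + 1 + ((n-s) + (k-j)*n)"
    using assms(9) len_encode[OF assms(1-7)] encode_form[OF assms(1-7)] by simp
  from nth_pattern[OF _ ql] assms(8) encode_form[OF assms(1-7)]
  have d1: "q = (i-1)*n + (r-1) \<or> q = (i-1)*n + (r-1) + 1 + ((n-r) + (j-i-1)*n + (s-1))"
    by metis
  have e: "(i-1)*n + (r-1) + 1 + ((n-r) + (j-i-1)*n + (s-1)) = (j-1)*n + (s-1)"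
  proof -
    have "(i-1)*n + (r-1) + 1 + ((n-r) + (j-i-1)*n + (s-1)) = (i-1)*n + n + (j-i-1)*n + (s-1)"
      using assms by simp
    also have "(i-1)*n + n + (j-i-1)*n = ((i-1) + 1 + (j-i-1))*n" by (simp add: algebra_simps)
    also have "(i-1) + 1 + (j-i-1) = j - 1" using assms by simp
    finally show ?thesis .
  qed
  from d1 have "q = (i-1)*n + (r-1) \<or> q = (j-1)*n + (s-1)" unfolding e .
  moreover have "r - 1 < n" "s - 1 < n" using assms by auto
  ultimately show ?thesis by auto
qed

lemma pairs_sub: "pairs k \<subseteq> {1..k} \<times> {1..k}" by (auto simp: pairs_def)
lemma finite_pairs[simp]: "finite (pairs k)" by (rule finite_subset[OF pairs_sub]) auto

lemma card_pairs: "card (pairs k) = k choose 2"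
proof (induction k)
  case 0
  have "pairs 0 = {}" by (auto simp: pairs_def)
  then show ?case by simp
next
  case (Suc k)
  have eq: "pairs (Suc k) = pairs k \<union> (\<lambda>i. (i, Suc k)) ` {1..k}"
    by (auto simp: pairs_def)
  have disj: "pairs k \<inter> (\<lambda>i. (i, Suc k)) ` {1..k} = {}" by (auto simp: pairs_def)
  have "card (pairs (Suc k)) = card (pairs k) + card ((\<lambda>i. (i, Suc k)) ` {1..k})"
    unfolding eq by (rule card_Un_disjoint) (use disj in auto)
  also have "card ((\<lambda>i. (i, Suc k)) ` {1..k}) = k"
    by (subst card_image) (auto simp: inj_on_def)
  finally show ?case using Suc.IH by (simp add: numeral_2_eq_2)
qed

lemma card_hit:
  assumes "1 \<le> b" "b \<le> k"
  shows "card {p \<in> pairs k. fst p = b \<or> snd p = b} \<le> k - 1"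
proof -
  have "{p \<in> pairs k. fst p = b \<or> snd p = b} \<subseteq> (\<lambda>j. (b, j)) ` {b<..k} \<union> (\<lambda>i. (i, b)) ` {1..<b}"
    by (auto simp: pairs_def)
  then have "card {p \<in> pairs k. fst p = b \<or> snd p = b} \<le> card ((\<lambda>j. (b, j)) ` {b<..k} \<union> (\<lambda>i. (i, b)) ` {1..<b})"
    by (rule card_mono[rotated]) auto
  also have "\<dots> \<le> card ((\<lambda>j. (b, j)) ` {b<..k}) + card ((\<lambda>i. (i, b)) ` {1..<b})"
    by (rule card_Un_le)
  also have "\<dots> \<le> card {b<..k} + card {1..<b}"
    by (intro add_mono card_image_le) auto
  also have "\<dots> = k - 1" using assms by simp
  finally show ?thesis .
qed

lemma ham_card: "length x = length y \<Longrightarrow> hamming x y = card {q. q < length x \<and> x!q \<noteq> y!q}"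
  unfolding hamming_def length_filter_conv_card by (intro arg_cong[where f=card]) auto

lemma ham_append: "length a = length c \<Longrightarrow> hamming (a@b) (c@d) = hamming a c + hamming b d"
  by (simp add: hamming_def)

lemma ham_sym: "hamming x y = hamming y x"
  unfolding hamming_def by (induction x y rule: list_induct2') auto

lemma ham_take: "hamming (take m x) (take m y) \<le> hamming x y"
proof -
  have "map2 (\<noteq>) (take m x) (take m y) = take m (map2 (\<noteq>) x y)"
    by (simp add: take_zip take_map)
  then show ?thesis unfolding hamming_def
    by (metis append_take_drop_id filter_append le_add1 length_append)
qed

lemma ham_tri:
  assumes "length x = length y" "length y = length z"
  shows "hamming x z \<le> hamming x y + hamming y z"
proof -
  have "{q. q < length x \<and> x!q \<noteq> z!q} \<subseteq> {q. q < length x \<and> x!q \<noteq> y!q} \<union> {q. q < length y \<and> y!q \<noteq> z!q}"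
    using assms by auto
  then have "card {q. q < length x \<and> x!q \<noteq> z!q} \<le> card ({q. q < length x \<and> x!q \<noteq> y!q} \<union> {q. q < length y \<and> y!q \<noteq> z!q})"
    by (rule card_mono[rotated]) auto
  also have "\<dots> \<le> card {q. q < length x \<and> x!q \<noteq> y!q} + card {q. q < length y \<and> y!q \<noteq> z!q}"
    by (rule card_Un_le)
  finally show ?thesis using assms by (simp add: ham_card)
qed

lemma ham_lower:
  assumes "length x = length y" "A \<subseteq> {..<length x}" "\<forall>q\<in>A. x!q \<noteq> y!q"
  shows "card A \<le> hamming x y"
  unfolding ham_card[OF assms(1)] by (rule card_mono) (use assms in auto)

lemma ham_sum: "length x = length y \<Longrightarrow> hamming x y = (\<Sum>q<length x. if x!q \<noteq> y!q then 1 else 0)"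
  by (simp add: ham_card sum.If_cases Int_def lessThan_def conj_commute)

lemma count_res:
  "N - 1 \<le> card {t. t < N \<and> (a+t) mod (N+1) \<noteq> N}"
proof -
  let ?S = "{t. t < N \<and> (a+t) mod (N+1) \<noteq> N}"
  let ?T = "{t. t < N \<and> (a+t) mod (N+1) = N}"
  have T1: "card ?T \<le> 1"
  proof -
    have fin: "finite ?T" by auto
    have *: "t1 = t2" if "t1 \<le> t2" "t1 \<in> ?T" "t2 \<in> ?T" for t1 t2
    proof -
      have "(a+t2) mod (N+1) = (a+t1) mod (N+1)" using that by simp
      then have "(N+1) dvd (a+t2) - (a+t1)" using that(1) by (subst mod_eq_dvd_iff_nat[symmetric]) auto
      then have dv: "(N+1) dvd (t2 - t1)" by simp
      have lt: "t2 - t1 < N+1" using that by auto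
      have "t2 - t1 = 0"
      proof (rule ccontr)
        assume "t2 - t1 \<noteq> 0"
        then have "N+1 \<le> t2 - t1" using dvd_imp_le[OF dv] by simp
        then show False using lt by simp
      qed
      then show ?thesis using that by simp
    qed
    have "\<forall>x\<in>?T. \<forall>y\<in>?T. x = y"
    proof (intro ballI)
      fix x y assume xy: "x \<in> ?T" "y \<in> ?T"
      show "x = y"
      proof (cases "x \<le> y")
        case True show ?thesis by (rule *[OF True xy])
      next
        case False then have yx: "y \<le> x" by simp
        show ?thesis using *[OF yx xy(2) xy(1)] by simp
      qed
    qed
    then have "card ?T \<le> Suc 0" by (rule card_le_Suc0_iff_eq[OF fin, THEN iffD2])
    then show ?thesis by simp
  qed
  have "?S = {..<N} - ?T" by auto
  then have "card ?S = card {..<N} - card ?T" by (simp add: card_Diff_subset subset_eq)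
  then show ?thesis using T1 by simp
qed

lemma inj_per: "inj_on (\<lambda>j::nat. j*(N+1)+c) A"
proof (rule inj_onI)
  fix x y assume "x*(N+1)+c = y*(N+1)+c"
  then have "x*(N+1) = y*(N+1)" by (simp only: add_right_cancel)
  then show "x = y" by (simp only: mult_cancel2) simp
qed

lemma misalign:
  fixes N E r :: nat and g0 g1 w :: "nat \<Rightarrow> bool"
  assumes "1 \<le> N" "E \<le> N" "0 < r" "r < N*(N+1) + N + E"
    and g0: "\<forall>y < N*(N+1)+N. g0 y = (y < N*(N+1) \<and> y mod (N+1) \<noteq> N)"
    and g1: "\<forall>y < N*(N+1)+N. g1 y = (y < N*(N+1) \<and> y mod (N+1) \<noteq> N)"
    and w: "\<forall>x < N*(N+1)+N. w x = (if r + x < N*(N+1) + N + E then g0 (r+x) else g1 (r+x-(N*(N+1) + N + E)))"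
  shows "N - 1 \<le> card {x. x < N*(N+1)+N \<and> w x \<noteq> (x < N*(N+1) \<and> x mod (N+1) \<noteq> N)}"
proof -
  define B where "B = N*(N+1) + N + E"
  define M where "M = {x. x < N*(N+1)+N \<and> w x \<noteq> (x < N*(N+1) \<and> x mod (N+1) \<noteq> N)}"
  have finM: "finite M" unfolding M_def by auto
  have key: "N - 1 \<le> card A" if "A \<subseteq> M" "N - 1 \<le> card A" for A using that by simp
  have sub: "N - 1 \<le> card M" if "A \<subseteq> M" "N - 1 \<le> card A" for A
    using card_mono[OF finM that(1)] that(2) by simp
  have modj: "(j*(N+1) + c) mod (N+1) = c mod (N+1)" for j c by (metis add.commute mod_mult_self1)
  have "N - 1 \<le> card M"
  proof (cases "r < N")
    case True
    let ?A = "(\<lambda>j. j*(N+1)+N) ` {..<N-1}"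
    have cA: "card ?A = N - 1" by (subst card_image[OF inj_per]) simp
    have AM: "?A \<subseteq> M"
    proof
      fix x assume "x \<in> ?A"
      then obtain j where j: "j < N - 1" "x = j*(N+1)+N" by auto
      have "j + 2 \<le> N" using j by simp
      then have "(j+2)*(N+1) \<le> N*(N+1)" by (rule mult_le_mono1)
      then have xr: "r + x < N*(N+1)" using j True by (simp add: algebra_simps)
      have "x mod (N+1) = N" using j modj[of j N] by simp
      moreover have "(r+x) mod (N+1) = (N + r) mod (N+1)"
      proof -
        have rx: "r + x = j*(N+1) + (N+r)" using j(2) by simp
        show ?thesis unfolding rx by (rule modj)
      qed
      moreover have "(N + r) mod (N+1) = r - 1"
      proof -
        have "N + r = (r - 1) + 1*(N+1)" using assms(3) by simp
        then show ?thesis using True by (metis mod_mult_self1 mod_less less_imp_diff_less less_SucI Suc_eq_plus1)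
      qed
      ultimately show "x \<in> M" using xr w g0 True j unfolding M_def B_def by auto
    qed
    show ?thesis using sub[OF AM] cA by simp
  next
    case rN: False
    show ?thesis
    proof (cases "r \<le> N*(N+1)")
      case True
      define a where "a = N*(N+1) - r"
      define S where "S = {t. t < N \<and> (a+t) mod (N+1) \<noteq> N}"
      let ?A = "(\<lambda>t. a+t) ` S"
      have cA: "N - 1 \<le> card ?A"
      proof -
        have "card ?A = card S" by (rule card_image) (simp add: inj_on_def)
        then show ?thesis using count_res[of N a] unfolding S_def by simp
      qed
      have AM: "?A \<subseteq> M"
      proof
        fix x assume "x \<in> ?A"
        then obtain t where t: "t \<in> S" "x = a+t" by auto
        have tN: "t < N" and tm: "(a+t) mod (N+1) \<noteq> N" using t(1) unfolding S_def by auto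
        have rx: "r + x = N*(N+1) + t" using t True unfolding a_def by simp
        have x1: "x < N*(N+1)" using t(2) tN rN True unfolding a_def by simp
        then have xl: "x < N*(N+1)+N" by simp
        have "w x = g0 (r+x)" using w[rule_format, OF xl] rx tN by simp
        also have "\<dots> = False" using g0[rule_format, of "r+x"] rx tN by simp
        finally have "w x = False" .
        moreover have "x mod (N+1) \<noteq> N" using t(2) tm by simp
        ultimately show "x \<in> M" using x1 xl unfolding M_def by auto
      qed
      show ?thesis using sub[OF AM] cA by simp
    next
      case False
      define u where "u = B - r"
      have rB: "r < B" using assms(4) unfolding B_def .
      have u1: "1 \<le> u" "u < N + E" using False assms(4) unfolding u_def B_def by auto
      have "N \<le> N*N" using assms(1) by simp
      with assms(2) have "E \<le> N*N" by (rule le_trans)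
      then have NN: "N + E \<le> N*(N+1)" by (simp add: algebra_simps)
      show ?thesis
      proof (cases "u < N")
        case True
        let ?A = "(\<lambda>j. j*(N+1)+N) ` {..<N}"
        have cA: "card ?A = N" by (subst card_image[OF inj_per]) simp
        have AM: "?A \<subseteq> M"
        proof
          fix x assume "x \<in> ?A"
          then obtain j where j: "j < N" "x = j*(N+1)+N" by auto
          have "j + 1 \<le> N" using j by simp
          then have "(j+1)*(N+1) \<le> N*(N+1)" by (rule mult_le_mono1)
          then have xl0: "x < N*(N+1)" using j by (simp add: algebra_simps)
          then have xl: "x < N*(N+1)+N" by simp
          have ux: "u < x" using j(2) True by simp
          have ge: "\<not> r + x < B" using ux rB unfolding u_def by arith
          have ex: "r + x - B = x - u" using ux rB unfolding u_def by arith
          have e: "r + x - B = j*(N+1) + (N - u)" unfolding ex using j(2) True by simp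
          have lt: "j*(N+1) + (N - u) < N*(N+1)" using xl0 j(2) True by simp
          have md: "(j*(N+1) + (N - u)) mod (N+1) = N - u"
          proof -
            have "(N - u) mod (N+1) = N - u" by simp
            then show ?thesis using modj[of j "N-u"] by simp
          qed
          have "w x = g1 (r + x - B)" using w[rule_format, OF xl] ge unfolding B_def by simp
          also have "\<dots> = True" unfolding e using g1[rule_format, of "j*(N+1) + (N - u)"] lt md u1 True by simp
          finally have "w x = True" .
          moreover have "x mod (N+1) = N" using j modj[of j N] by simp
          ultimately show "x \<in> M" using xl unfolding M_def by auto
        qed
        show ?thesis using sub[OF AM] cA by simp
      next
        case uN: False
        define a where "a = N*(N+1) - u"
        define S where "S = {t. t < N \<and> (a+t) mod (N+1) \<noteq> N}"
        let ?A = "(\<lambda>t. N*(N+1)+t) ` S"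
        have cA: "N - 1 \<le> card ?A"
      proof -
        have "card ?A = card S" by (rule card_image) (simp add: inj_on_def)
        then show ?thesis using count_res[of N a] unfolding S_def by simp
      qed
        have AM: "?A \<subseteq> M"
        proof
          fix x assume "x \<in> ?A"
          then obtain t where t: "t \<in> S" "x = N*(N+1)+t" by auto
          have tN: "t < N" and tm: "(a+t) mod (N+1) \<noteq> N" using t(1) unfolding S_def by auto
          have xl: "x < N*(N+1)+N" using t(2) tN by simp
          have ux: "u < x" using t(2) u1 NN by simp
          have ge: "\<not> r + x < B" using ux rB unfolding u_def by arith
          have ex: "r + x - B = x - u" using ux rB unfolding u_def by arith
          have e: "r + x - B = a + t" unfolding ex a_def using t(2) u1 NN by simp
          have lt: "a + t < N*(N+1)" using tN uN u1 NN unfolding a_def by simp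
          have "w x = g1 (r + x - B)" using w[rule_format, OF xl] ge unfolding B_def by simp
          also have "\<dots> = True" unfolding e using g1[rule_format, of "a+t"] lt tm by simp
          finally have "w x = True" .
          moreover have "\<not> x < N*(N+1)" using t(2) by simp
          ultimately show "x \<in> M" using xl unfolding M_def by auto
        qed
        show ?thesis using sub[OF AM] cA by simp
      qed
    qed
  qed
  then show ?thesis unfolding M_def .
qed

lemma len_concat_const: "(\<forall>b\<in>set bs. length b = B) \<Longrightarrow> length (concat bs) = length bs * B"
  by (induction bs) auto

lemma nth_concat_const:
  "(\<forall>b\<in>set bs. length b = B) \<Longrightarrow> m < length bs \<Longrightarrow> y < B \<Longrightarrow> concat bs ! (m*B + y) = bs!m!y"
proof (induction bs arbitrary: m)
  case Nil then show ?case by simp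
next
  case (Cons b bs)
  have lb: "length b = B" using Cons.prems(1) by simp
  show ?case
  proof (cases m)
    case 0 then show ?thesis using Cons.prems(3) lb by (simp add: nth_append)
  next
    case (Suc m')
    have m': "m' < length bs" using Cons.prems(2) Suc by simp
    have "concat (b # bs) ! (m*B + y) = (b @ concat bs) ! (B + (m'*B + y))"
      using Suc by (simp add: algebra_simps)
    also have "\<dots> = concat bs ! (m'*B + y)" using nth_append_length_plus[of b "concat bs" "m'*B+y"] lb by simp
    also have "\<dots> = bs ! m' ! y" using Cons.IH[OF _ m' Cons.prems(3)] Cons.prems(1) by simp
    finally show ?thesis using Suc by simp
  qed
qed

lemma substr_nth: "p + l \<le> length w \<Longrightarrow> x < l \<Longrightarrow> substr w p l ! x = w ! (p + x)"
  by (simp add: substr_def)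

lemma substr_len: "p + l \<le> length w \<Longrightarrow> length (substr w p l) = l"
  by (simp add: substr_def)

lemma window_aligned:
  assumes "\<forall>b\<in>set bs. length b = B" "p mod B = 0" "p + B \<le> length (concat bs)" "0 < B"
  shows "substr (concat bs) p B = bs ! (p div B) \<and> p div B < length bs"
proof -
  have lc: "length (concat bs) = length bs * B" using len_concat_const[OF assms(1)] .
  have p: "(p div B) * B = p" using div_mult_mod_eq[of p B] assms(2) by simp
  have lt: "p div B < length bs"
  proof -
    have "(p div B + 1) * B = p + B" using p by (simp add: algebra_simps)
    then have "(p div B + 1) * B \<le> length bs * B" using assms(3) lc by simp
    then have "p div B + 1 \<le> length bs" using assms(4) mult_le_cancel2 by blast
    then show ?thesis by simp
  qed
  have "substr (concat bs) p B = bs ! (p div B)"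
  proof (rule nth_equalityI)
    show "length (substr (concat bs) p B) = length (bs ! (p div B))"
      using substr_len[OF assms(3)] assms(1) lt by simp
    fix x assume "x < length (substr (concat bs) p B)"
    then have x: "x < B" using substr_len[OF assms(3)] by simp
    have "substr (concat bs) p B ! x = concat bs ! ((p div B) * B + x)"
      using substr_nth[OF assms(3) x] p by simp
    also have "\<dots> = bs ! (p div B) ! x" by (rule nth_concat_const[OF assms(1) lt x])
    finally show "substr (concat bs) p B ! x = bs ! (p div B) ! x" .
  qed
  then show ?thesis using lt by simp
qed

lemma edge_props:
  assumes "simple_graph_edges n es" "e \<in> set es"
  shows "1 \<le> fst e" "fst e < snd e" "snd e \<le> n"
  using assms unfolding simple_graph_edges_def by auto

lemma len_cp: "cp_len n k = length (front_tag n k) + n*k"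
proof -
  have "(n*k^3)*(n*k^3+1) + n*k^3 + n*k = n^2*k^6 + 2*n*k^3 + n*k"
    by (simp add: power2_eq_square algebra_simps power_mult_distrib flip: power_add)
  then show ?thesis unfolding len_ft cp_len_def by simp
qed

lemma block_len:
  assumes "simple_graph_edges n es" "e \<in> set es" "(i, j) \<in> pairs k"
  shows "length (block n k i j e) = cp_len n k"
proof -
  obtain r s where e: "e = (r, s)" by (cases e)
  have r: "1 \<le> r" "r < s" "s \<le> n" using edge_props[OF assms(1,2)] unfolding e by simp_all
  have r2: "r \<le> n" "1 \<le> s" using r by simp_all
  have ij: "1 \<le> i" "i < j" "j \<le> k" using assms(3) unfolding pairs_def by simp_all
  have le: "length (encode n k i j e) = n*k" unfolding e by (rule len_encode[OF ij r(1) r2 r(3)])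
  have "length (block n k i j e) = length (front_tag n k) + length (encode n k i j e)"
    unfolding block_def by (rule length_append)
  also have "\<dots> = cp_len n k" unfolding le len_cp ..
  finally show ?thesis .
qed

lemma choice_blocks:
  assumes "simple_graph_edges n es" "(i, j) \<in> pairs k"
  shows "\<forall>b\<in>set (map (block n k i j) es). length b = cp_len n k"
proof
  fix b assume "b \<in> set (map (block n k i j) es)"
  then obtain e where e: "e \<in> set es" "b = block n k i j e" by auto
  show "length b = cp_len n k" unfolding e(2) by (rule block_len[OF assms(1) e(1) assms(2)])
qed

lemma misaligned_ham:
  assumes sg: "simple_graph_edges n es" and ij: "(i,j) \<in> pairs k" and n1: "1 \<le> n" and k1: "1 \<le> k"
    and len: "p + cp_len n k \<le> length (choice_string n k es i j)" and r0: "p mod cp_len n k \<noteq> 0"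
  shows "n*k^3 - 1 \<le> hamming (take (length (front_tag n k)) (substr (choice_string n k es i j) p (cp_len n k))) (front_tag n k)"
proof -
  define N where "N = n*k^3"
  define E where "E = n*k"
  define L where "L = cp_len n k"
  define lF where "lF = length (front_tag n k)"
  define bs where "bs = map (block n k i j) es"
  define cs where "cs = choice_string n k es i j"
  have cs_eq: "cs = concat bs" unfolding cs_def bs_def choice_string_def ..
  have hb: "\<forall>b\<in>set bs. length b = L" unfolding bs_def L_def by (rule choice_blocks[OF sg ij])
  have lcs: "length cs = length es * L" unfolding cs_eq using len_concat_const[OF hb] bs_def by simp
  have lF: "lF = N*(N+1) + N" unfolding lF_def N_def by (rule len_ft)
  have LL: "L = lF + E" unfolding L_def lF_def E_def by (rule len_cp)
  have N1: "1 \<le> N" unfolding N_def using n1 k1 by simp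
  have EN: "E \<le> N" unfolding E_def N_def using n1 k1
    by (metis mult_le_mono2 power_increasing_iff  le_refl power_one_right one_le_numeral Suc_n_not_le_n not_less_eq_eq power_increasing)
  have L0: "0 < L" using LL lF N1 by simp
  define m where "m = p div L"
  define r where "r = p mod L"
  have pmr: "p = m*L + r" unfolding m_def r_def by simp
  have r0': "0 < r" "r < L" using r0 L0 unfolding r_def L_def by auto
  have m1: "m + 1 < length es"
  proof -
    have "(m+1)*L < length es * L" using len pmr r0' lcs unfolding L_def cs_def by (simp add: algebra_simps)
    then show ?thesis by (rule mult_less_cancel2[THEN iffD1, THEN conjunct2])
  qed
  have m1b: "m+1 < length bs" and m0b: "m < length bs" using m1 unfolding bs_def by simp_all
  have lW: "length (substr cs p L) = L" using substr_len len unfolding cs_def L_def by blast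
  have g: "bs ! m' ! y = (y < N*(N+1) \<and> y mod (N+1) \<noteq> N)" if "m' < length es" "y < N*(N+1)+N" for m' y
  proof -
    have "bs ! m' ! y = (front_tag n k @ encode n k i j (es ! m')) ! y"
      unfolding bs_def using that(1) by (simp add: block_def)
    also have "\<dots> = front_tag n k ! y" using that(2) lF unfolding lF_def by (simp add: nth_append)
    also have "\<dots> = (y < N*(N+1) \<and> y mod (N+1) \<noteq> N)" unfolding N_def
      by (rule nth_ft) (use that(2) lF in \<open>simp add: lF_def N_def\<close>)
    finally show ?thesis .
  qed
  define w where "w x = cs ! (p + x)" for x
  have wx: "\<forall>x < N*(N+1)+N. w x = (if r + x < N*(N+1) + N + E then bs!m! (r+x) else bs!(m+1)! (r+x-(N*(N+1) + N + E)))"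
  proof (intro allI impI)
    fix x assume x: "x < N*(N+1)+N"
    show "w x = (if r + x < N*(N+1) + N + E then bs!m! (r+x) else bs!(m+1)! (r+x-(N*(N+1) + N + E)))"
    proof (cases "r + x < L")
      case True
      have "w x = concat bs ! (m*L + (r+x))" unfolding w_def cs_eq pmr by (simp add: add.assoc)
      also have "\<dots> = bs!m!(r+x)" by (rule nth_concat_const[OF hb m0b True])
      finally show ?thesis using True LL lF by simp
    next
      case False
      have lt: "r + x - L < L" using r0' x LL lF by simp
      have "(m+1)*L + (r+x-L) = m*L + r + x" using False by simp
      then have "w x = concat bs ! ((m+1)*L + (r+x-L))" unfolding w_def cs_eq pmr by (simp add: add.assoc)
      also have "\<dots> = bs!(m+1)!(r+x-L)" by (rule nth_concat_const[OF hb m1b lt])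
      finally show ?thesis using False LL lF by simp
    qed
  qed
  have mis: "N - 1 \<le> card {x. x < N*(N+1)+N \<and> w x \<noteq> (x < N*(N+1) \<and> x mod (N+1) \<noteq> N)}"
  proof (rule misalign[OF N1 EN r0'(1)])
    show "r < N*(N+1) + N + E" using r0' LL lF by simp
    show "\<forall>y < N*(N+1)+N. bs!m! y = (y < N*(N+1) \<and> y mod (N+1) \<noteq> N)" using g m1 by simp
    show "\<forall>y < N*(N+1)+N. bs!(m+1)! y = (y < N*(N+1) \<and> y mod (N+1) \<noteq> N)" using g m1 by simp
    show "\<forall>x < N*(N+1)+N. w x = (if r + x < N*(N+1) + N + E then bs!m! (r+x) else bs!(m+1)! (r+x-(N*(N+1) + N + E)))"
      by (rule wx)
  qed
  have lT: "length (take lF (substr cs p L)) = lF" using lW LL by simp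
  have "hamming (take lF (substr cs p L)) (front_tag n k)
      = card {x. x < lF \<and> take lF (substr cs p L) ! x \<noteq> front_tag n k ! x}"
    using ham_card[of "take lF (substr cs p L)" "front_tag n k"] lT unfolding lF_def by simp
  also have "{x. x < lF \<and> take lF (substr cs p L) ! x \<noteq> front_tag n k ! x}
      = {x. x < N*(N+1)+N \<and> w x \<noteq> (x < N*(N+1) \<and> x mod (N+1) \<noteq> N)}"
  proof (rule Collect_cong)
    fix x
    show "(x < lF \<and> take lF (substr cs p L) ! x \<noteq> front_tag n k ! x) =
          (x < N*(N+1)+N \<and> w x \<noteq> (x < N*(N+1) \<and> x mod (N+1) \<noteq> N))"
    proof (cases "x < lF")
      case True
      have xL: "x < L" using True LL by simp
      have "take lF (substr cs p L) ! x = w x"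
        using True substr_nth[of p L cs x] len xL unfolding w_def cs_def L_def by simp
      moreover have "front_tag n k ! x = (x < N*(N+1) \<and> x mod (N+1) \<noteq> N)"
        unfolding N_def by (rule nth_ft) (use True in \<open>simp add: lF_def\<close>)
      ultimately show ?thesis using True lF by simp
    next
      case False then show ?thesis using lF by simp
    qed
  qed
  finally show ?thesis using mis unfolding N_def lF_def cs_def L_def by simp
qed

lemma sum_ind: "finite A \<Longrightarrow> (\<Sum>x\<in>A. if P x then 1 else 0::nat) = card {x\<in>A. P x}"
  by (simp add: sum.inter_filter[symmetric])

lemma aux_lin: "T = C - (k-1) \<Longrightarrow> C \<le> K - k \<Longrightarrow> 3*k \<le> K \<Longrightarrow> 3 \<le> k \<Longrightarrow> T + 2 \<le> (K::nat)"
  by arith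

lemma arith_k:
  assumes "k \<ge> 3"
  shows "1 \<le> num_templates k" "num_templates k + 2 \<le> k*k"
proof -
  define C where "C = k choose 2"
  have C: "C = k*(k-1) div 2" unfolding C_def by (rule choose_two)
  have a: "2*k \<le> k*(k-1)" using assms by simp
  have "(2*k) div 2 \<le> k*(k-1) div 2" using a by (rule div_le_mono)
  then have Ck: "k \<le> C" unfolding C by simp
  have "C \<le> k*(k-1)" unfolding C by (rule div_le_dividend)
  also have "k*(k-1) = k*k - k" by (simp add: diff_mult_distrib2)
  finally have Cu: "C \<le> k*k - k" .
  have kk: "3*k \<le> k*k" using assms by simp
  have T: "num_templates k = C - (k-1)" unfolding num_templates_def C_def ..
  show "1 \<le> num_templates k" using T Ck assms by simp
  show "num_templates k + 2 \<le> k*k" by (rule aux_lin[OF T Cu kk assms])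
qed

lemma key_tail:
  assumes lt: "length t = n*k"
    and encs: "\<forall>p\<in>pairs k. length (enc p) = n*k \<and> (\<forall>q<n*k. enc p ! q \<longrightarrow> q div n = fst p - 1 \<or> q div n = snd p - 1)"
  shows "num_templates k * (n*k) \<le> (\<Sum>p\<in>pairs k. hamming t (enc p)) + num_templates k * hamming t (ones (n*k))"
proof -
  define T where "T = num_templates k"
  define ind where "ind p q = (if t!q \<noteq> enc p ! q then 1 else 0::nat)" for p q
  define indo where "indo q = (if t!q \<noteq> True then 1 else 0::nat)" for q
  have h1: "hamming t (enc p) = (\<Sum>q<n*k. ind p q)" if "p \<in> pairs k" for p
    unfolding ind_def using ham_sum[of t "enc p"] encs that lt by simp
  have h2: "hamming t (ones (n*k)) = (\<Sum>q<n*k. indo q)"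
    unfolding indo_def using ham_sum[of t "ones (n*k)"] lt by (simp add: ones_def)
  have "(\<Sum>p\<in>pairs k. hamming t (enc p)) + T * hamming t (ones (n*k))
      = (\<Sum>p\<in>pairs k. \<Sum>q<n*k. ind p q) + T * (\<Sum>q<n*k. indo q)"
    using h1 h2 by simp
  also have "\<dots> = (\<Sum>q<n*k. (\<Sum>p\<in>pairs k. ind p q) + T * indo q)"
    by (simp add: sum.swap[of _ "pairs k"] sum.distrib sum_distrib_left)
  finally have eq: "(\<Sum>p\<in>pairs k. hamming t (enc p)) + T * hamming t (ones (n*k))
      = (\<Sum>q<n*k. (\<Sum>p\<in>pairs k. ind p q) + T * indo q)" .
  have per: "T \<le> (\<Sum>p\<in>pairs k. ind p q) + T * indo q" if q: "q < n*k" for q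
  proof (cases "t!q")
    case False then show ?thesis unfolding indo_def by simp
  next
    case True
    have "(\<Sum>p\<in>pairs k. ind p q) = card {p\<in>pairs k. \<not> enc p ! q}"
      unfolding ind_def using True sum_ind[of "pairs k" "\<lambda>p. \<not> enc p ! q"] by simp
    also have "{p\<in>pairs k. \<not> enc p ! q} = pairs k - {p\<in>pairs k. enc p ! q}" by auto
    also have "card \<dots> = card (pairs k) - card {p\<in>pairs k. enc p ! q}"
      by (rule card_Diff_subset) auto
    finally have s: "(\<Sum>p\<in>pairs k. ind p q) = card (pairs k) - card {p\<in>pairs k. enc p ! q}" .
    define b where "b = q div n + 1"
    have n0: "0 < n" using q by (cases n) auto
    have b: "1 \<le> b" "b \<le> k" unfolding b_def using q n0
      by (simp_all add: less_mult_imp_div_less Suc_le_eq div_less_iff_less_mult mult.commute)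
    have "{p\<in>pairs k. enc p ! q} \<subseteq> {p \<in> pairs k. fst p = b \<or> snd p = b}"
    proof
      fix p assume p: "p \<in> {p\<in>pairs k. enc p ! q}"
      then have "q div n = fst p - 1 \<or> q div n = snd p - 1" using encs q by auto
      moreover have "1 \<le> fst p" "1 \<le> snd p" using p by (auto simp: pairs_def)
      ultimately show "p \<in> {p \<in> pairs k. fst p = b \<or> snd p = b}" using p unfolding b_def by auto
    qed
    then have "card {p\<in>pairs k. enc p ! q} \<le> card {p \<in> pairs k. fst p = b \<or> snd p = b}"
      by (rule card_mono[rotated]) simp
    also have "\<dots> \<le> k - 1" by (rule card_hit[OF b])
    finally have "card {p\<in>pairs k. enc p ! q} \<le> k - 1" .
    then have "T \<le> (\<Sum>p\<in>pairs k. ind p q)" unfolding s T_def num_templates_def card_pairs by simp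
    then show ?thesis by simp
  qed
  have "T * (n*k) = (\<Sum>q<n*k. T)" by simp
  also have "\<dots> \<le> (\<Sum>q<n*k. (\<Sum>p\<in>pairs k. ind p q) + T * indo q)"
    by (rule sum_mono) (use per in simp)
  finally show ?thesis using eq unfolding T_def by simp
qed

theorem lemma6:
  fixes n k :: nat and es :: "(nat \<times> nat) list" and s :: "bool list"
    and pc :: "nat \<Rightarrow> nat \<Rightarrow> nat" and pt :: "nat \<Rightarrow> nat"
  assumes "simple_graph_edges n es"
    and "k \<ge> 3"
    and "is_solution n k es s pc pt"
  shows "prefix (front_tag n k) s
    \<and> (\<forall>(i, j) \<in> pairs k. prefix (front_tag n k)
          (substr (choice_string n k es i j) (pc i j) (cp_len n k)))
    \<and> (\<forall>t < num_templates k. prefix (front_tag n k)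
          (substr (template_string n k) (pt t) (cp_len n k)))"
proof (cases "n = 0")
  case True
  have "front_tag n k = []" using True by (simp add: front_tag_def zeros_def)
  then show ?thesis by simp
next
  case False
  note sg = assms(1) and k3 = assms(2)
  have n1: "1 \<le> n" using False by simp
  have k1: "1 \<le> k" using k3 by simp
  define N where "N = n*k^3"
  define E where "E = n*k"
  define L where "L = cp_len n k"
  define F where "F = front_tag n k"
  define lF where "lF = length F"
  define T where "T = num_templates k"
  define tm where "tm = template_string n k"
  define W where "W i j = substr (choice_string n k es i j) (pc i j) L" for i j
  have LL: "L = lF + E" unfolding L_def lF_def E_def F_def by (rule len_cp)
  have ls: "length s = L" and hpc: "\<forall>(i, j) \<in> pairs k. pc i j + L \<le> length (choice_string n k es i j)"
    and hpt: "\<forall>t < T. pt t + L \<le> length tm"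
    and tot0: "(\<Sum>(i, j) \<in> pairs k. hamming s (W i j)) + (\<Sum>t < T. hamming s (substr tm (pt t) L)) \<le> T * n * k"
    using assms(3) unfolding is_solution_def L_def T_def tm_def W_def cp_dist_def by auto
  have T1: "1 \<le> T" unfolding T_def by (rule arith_k(1)[OF k3])
  have T2: "T + 2 \<le> k*k" unfolding T_def by (rule arith_k(2)[OF k3])
  have dN: "T * n * k + 2 * E \<le> N"
  proof -
    have "T * n * k + 2 * E = (T + 2) * E" unfolding E_def by (simp add: algebra_simps)
    also have "\<dots> \<le> (k*k) * E" using T2 by (rule mult_le_mono1)
    also have "\<dots> = N" unfolding E_def N_def by (simp add: power3_eq_cube algebra_simps)
    finally show ?thesis .
  qed
  have E3: "3 \<le> E" unfolding E_def using n1 k3 by (metis mult_le_mono one_le_numeral mult_1)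
  have ltm: "length tm = L" unfolding tm_def template_string_def LL lF_def F_def E_def by simp
  have tmF: "tm = F @ ones E" unfolding tm_def template_string_def F_def E_def ..
  have pt0: "substr tm (pt t) L = tm" if "t < T" for t
  proof -
    have "pt t = 0" using hpt that ltm by auto
    then show ?thesis unfolding substr_def using ltm by simp
  qed
  have tsum: "(\<Sum>t < T. hamming s (substr tm (pt t) L)) = T * hamming s tm"
    using pt0 by simp
  have tot: "(\<Sum>(i, j) \<in> pairs k. hamming s (W i j)) + T * hamming s tm \<le> T * n * k"
    using tot0 tsum by simp
  have hW_le: "hamming s (W i j) \<le> (\<Sum>(i, j) \<in> pairs k. hamming s (W i j))" if "(i,j) \<in> pairs k" for i j
    using member_le_sum[of "(i,j)" "pairs k" "\<lambda>(i,j). hamming s (W i j)"] that by simp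
  have htm_le: "hamming s tm \<le> T * hamming s tm" using T1 by simp
  have lWij: "length (W i j) = L" if "(i,j) \<in> pairs k" for i j
    using hpc that substr_len unfolding W_def by fastforce
  have aligned: "pc i j mod L = 0" if ij: "(i,j) \<in> pairs k" for i j
  proof (rule ccontr)
    assume r0: "pc i j mod L \<noteq> 0"
    have lenp: "pc i j + cp_len n k \<le> length (choice_string n k es i j)" using hpc ij unfolding L_def by auto
    have mis: "N - 1 \<le> hamming (take lF (W i j)) F"
      using misaligned_ham[OF sg ij n1 k1 lenp] r0 unfolding N_def lF_def F_def W_def L_def by simp
    have l1: "length (take lF (W i j)) = lF" using lWij[OF ij] LL by simp
    have l2: "length (take lF s) = lF" using ls LL by simp
    have "hamming (take lF (W i j)) F \<le> hamming (take lF (W i j)) (take lF s) + hamming (take lF s) F"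
      by (rule ham_tri) (use l1 l2 in \<open>simp_all add: lF_def\<close>)
    also have "hamming (take lF (W i j)) (take lF s) \<le> hamming s (W i j)"
      using ham_take[of lF "W i j" s] ham_sym[of "W i j" s] by simp
    also have "hamming (take lF s) F \<le> hamming s tm"
    proof -
      have "F = take lF tm" unfolding tmF lF_def by simp
      then show ?thesis using ham_take[of lF s tm] by simp
    qed
    finally have "N - 1 \<le> hamming s (W i j) + hamming s tm" using mis by linarith
    also have "\<dots> \<le> T * n * k" using hW_le[OF ij] htm_le tot by linarith
    finally show False using dN E3 by linarith
  qed
  define ed where "ed i j = es ! (pc i j div L)" for i j
  have Wblk: "W i j = block n k i j (ed i j) \<and> ed i j \<in> set es" if ij: "(i,j) \<in> pairs k" for i j
  proof -
    have hb: "\<forall>b\<in>set (map (block n k i j) es). length b = L" unfolding L_def by (rule choice_blocks[OF sg ij])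
    have L0: "0 < L" using LL E3 by simp
    have lenp: "pc i j + L \<le> length (concat (map (block n k i j) es))"
      using hpc ij unfolding choice_string_def by auto
    have wa: "substr (concat (map (block n k i j) es)) (pc i j) L = map (block n k i j) es ! (pc i j div L)
        \<and> pc i j div L < length (map (block n k i j) es)"
      by (rule window_aligned[OF hb aligned[OF ij] lenp L0])
    then show ?thesis unfolding W_def choice_string_def ed_def by simp
  qed
  define enc where "enc p = encode n k (fst p) (snd p) (ed (fst p) (snd p))" for p
  have encprops: "length (enc p) = E \<and> (\<forall>q<E. enc p ! q \<longrightarrow> q div n = fst p - 1 \<or> q div n = snd p - 1)"
    if p: "p \<in> pairs k" for p
  proof -
    obtain i j where pij: "p = (i,j)" by (cases p)
    have ij: "(i,j) \<in> pairs k" using p pij by simp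
    have e: "ed i j \<in> set es" using Wblk[OF ij] by simp
    obtain r s' where rs: "ed i j = (r, s')" by (cases "ed i j")
    have r: "1 \<le> r" "r < s'" "s' \<le> n" using edge_props[OF sg e] unfolding rs by simp_all
    have r2: "r \<le> n" "1 \<le> s'" using r by simp_all
    have ijs: "1 \<le> i" "i < j" "j \<le> k" using ij unfolding pairs_def by simp_all
    have "length (enc p) = E" unfolding enc_def pij E_def using rs len_encode[OF ijs r(1) r2 r(3)] by simp
    moreover have "\<forall>q<E. enc p ! q \<longrightarrow> q div n = fst p - 1 \<or> q div n = snd p - 1"
    proof (intro allI impI)
      fix q assume q: "q < E" "enc p ! q"
      have "encode n k i j (r, s') ! q" using q(2) rs unfolding enc_def pij by simp
      then have "q div n = i - 1 \<or> q div n = j - 1"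
        using nth_encode[OF ijs r(1) r2 r(3)] q(1) unfolding E_def by blast
      then show "q div n = fst p - 1 \<or> q div n = snd p - 1" unfolding pij by simp
    qed
    ultimately show ?thesis by simp
  qed
  have Wenc: "W i j = F @ enc (i,j)" if "(i,j) \<in> pairs k" for i j
    using Wblk[OF that] unfolding block_def enc_def F_def by simp
  define s1 where "s1 = take lF s"
  define s2 where "s2 = drop lF s"
  have ss: "s = s1 @ s2" unfolding s1_def s2_def by simp
  have ls1: "length s1 = lF" unfolding s1_def using ls LL by simp
  have ls2: "length s2 = E" unfolding s2_def using ls LL by simp
  define h where "h = hamming s1 F"
  have hW: "hamming s (W i j) = h + hamming s2 (enc (i,j))" if "(i,j) \<in> pairs k" for i j
    unfolding Wenc[OF that] ss h_def by (rule ham_append) (simp add: ls1 lF_def)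
  have htm: "hamming s tm = h + hamming s2 (ones E)"
    unfolding tmF ss h_def by (rule ham_append) (simp add: ls1 lF_def)
  have key: "T * E \<le> (\<Sum>p\<in>pairs k. hamming s2 (enc p)) + T * hamming s2 (ones E)"
    unfolding T_def E_def by (rule key_tail) (use ls2 encprops in \<open>simp_all add: E_def\<close>)
  have "(\<Sum>(i, j) \<in> pairs k. hamming s (W i j)) = (\<Sum>p \<in> pairs k. h + hamming s2 (enc p))"
    by (rule sum.cong) (auto simp: hW)
  also have "\<dots> \<ge> (\<Sum>p \<in> pairs k. hamming s2 (enc p))" by (rule sum_mono) simp
  finally have sW: "(\<Sum>p \<in> pairs k. hamming s2 (enc p)) \<le> (\<Sum>(i, j) \<in> pairs k. hamming s (W i j))" .
  have "T * h + T * E \<le> T * h + (\<Sum>p\<in>pairs k. hamming s2 (enc p)) + T * hamming s2 (ones E)"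
    using key by simp
  also have "\<dots> \<le> (\<Sum>(i, j) \<in> pairs k. hamming s (W i j)) + T * hamming s tm"
    using sW unfolding htm by (simp add: algebra_simps)
  also have "\<dots> \<le> T * E" using tot unfolding E_def by (simp add: mult.assoc)
  finally have "T * h = 0" by simp
  then have h0: "h = 0" using T1 by simp
  have "s1 = F"
  proof (rule nth_equalityI)
    show "length s1 = length F" using ls1 lF_def by simp
    fix q assume q: "q < length s1"
    have "card {q. q < length s1 \<and> s1!q \<noteq> F!q} = 0"
      using h0 ham_card[of s1 F] ls1 unfolding h_def lF_def by simp
    then show "s1 ! q = F ! q" using q by simp
  qed
  then have P1: "prefix F s" unfolding ss by simp
  have P2: "\<forall>(i, j) \<in> pairs k. prefix F (W i j)" using Wenc by auto
  have P3: "\<forall>t < T. prefix F (substr tm (pt t) L)" using pt0 tmF by simp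
  show ?thesis using P1 P2 P3 unfolding F_def W_def L_def T_def tm_def by blast
qed

end
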